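(* For $l>0$ let $KP_{3,4}^3(l)$ be the hyperbolic tetrakis truncated octahedron: take a hyperbolic truncated octahedron with all faces regular (squares and hexagons) and edge length $l$, and attach to each of its square faces a pyramid obtained by subdividing a regular hyperbolic cube of edge length $l$ into six pyramids with apex at the center of the cube and bases the faces of the cube. Let $\alpha$ be the dihedral angle between two hexagonal faces of the truncated octahedron, $\beta$ the dihedral angle between a square and a hexagonal face of the truncated octahedron, and $\gamma$ the dihedral angle between the base and a side of the attached pyramid. Then there exists a value of $l$ such that \[\alpha+2\beta+2\gamma=2\pi.\]
   Context: The pyramids attached have dihedral angle $2\pi/3$ between adjacent triangular sides, since three cubes meet around each edge of the subdivision. *)

theory Defs
  imports Complex_Main
begin

text \<open>Hyperbolic 3-space: hyperboloid model in Minkowski space R^{3,1} (signature +,+,+,-),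
  with points given in the Beltrami--Klein model (open unit ball of R^3).\<close>

type_synonym pt3 = "real \<times> real \<times> real"
type_synonym vec4 = "real \<times> real \<times> real \<times> real"

definition mink :: "vec4 \<Rightarrow> vec4 \<Rightarrow> real" where
  "mink p q = (case p of (x1, y1, z1, t1) \<Rightarrow> case q of (x2, y2, z2, t2) \<Rightarrow>
      x1 * x2 + y1 * y2 + z1 * z2 - t1 * t2)"

definition in_klein_ball :: "pt3 \<Rightarrow> bool" where
  "in_klein_ball u = (case u of (x, y, z) \<Rightarrow> x^2 + y^2 + z^2 < 1)"

definition klein_lift :: "pt3 \<Rightarrow> vec4" where
  "klein_lift u = (case u of (x, y, z) \<Rightarrow>
     (let s = 1 / sqrt (1 - (x^2 + y^2 + z^2)) in (s * x, s * y, s * z, s)))"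

definition hdist :: "pt3 \<Rightarrow> pt3 \<Rightarrow> real" where
  "hdist u v = arcosh (- mink (klein_lift u) (klein_lift v))"

text \<open>A hyperbolic half-space, given in the Klein model as {x. n1 x + n2 y + n3 z \<le> c},
  is the half-space {X. <N, X> \<le> 0} of the hyperboloid with outward (spacelike) normal
  N = (n1, n2, n3, c).  The interior dihedral angle of a polyhedron along the edge where two
  of its bounding half-spaces with outward normals N1, N2 meet is the angle theta with
  cos theta = - <N1, N2> / (|N1| |N2|).\<close>
definition khalf :: "pt3 \<Rightarrow> real \<Rightarrow> vec4" where
  "khalf n c = (case n of (n1, n2, n3) \<Rightarrow> (n1, n2, n3, c))"

definition dihedral :: "vec4 \<Rightarrow> vec4 \<Rightarrow> real" where
  "dihedral N1 N2 = arccos (- mink N1 N2 / (sqrt (mink N1 N1) * sqrt (mink N2 N2)))"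

text \<open>Truncated octahedron centred at the origin of the Klein model with octahedral symmetry:
  vertices are all coordinate permutations of (0, \<plusminus>a, \<plusminus>b), 0 < a < b.  Its faces are the
  squares in the planes x = \<plusminus>b, y = \<plusminus>b, z = \<plusminus>b and the hexagons in the planes
  \<plusminus>x \<plusminus>y \<plusminus>z = a + b.  Edges are of two kinds: square/hexagon edges such as
  (b,0,a)--(b,a,0) and hexagon/hexagon edges such as (b,a,0)--(a,b,0).\<close>
definition TO_vertices :: "real \<Rightarrow> real \<Rightarrow> pt3 set" where
  "TO_vertices a b =
     (\<Union>\<sigma> \<in> {\<lambda>(x,y,z). (x,y,z), \<lambda>(x,y,z). (x,z,y), \<lambda>(x,y,z). (y,x,z),
              \<lambda>(x,y,z). (y,z,x), \<lambda>(x,y,z). (z,x,y), \<lambda>(x,y,z). (z,y,x)}.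
        \<sigma> ` {(0, s * a, t * b) | s t. s \<in> {1, -1} \<and> t \<in> {1, -1}})"

text \<open>The hyperbolic truncated octahedron with all faces regular and all edges of length l
  (its faces are then regular by the octahedral symmetry).\<close>
definition TO_config :: "real \<Rightarrow> real \<Rightarrow> real \<Rightarrow> bool" where
  "TO_config a b l \<longleftrightarrow> 0 < a \<and> a < b \<and> (\<forall>v \<in> TO_vertices a b. in_klein_ball v)
     \<and> hdist (b, 0, a) (b, a, 0) = l \<and> hdist (b, a, 0) (a, b, 0) = l"

text \<open>alpha: dihedral angle between two adjacent hexagons (faces x+y+z \<le> a+b, x+y-z \<le> a+b,
  along the edge (b,a,0)--(a,b,0)).\<close>
definition TO_alpha :: "real \<Rightarrow> real \<Rightarrow> real" where
  "TO_alpha a b = dihedral (khalf (1, 1, 1) (a + b)) (khalf (1, 1, -1) (a + b))"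

text \<open>beta: dihedral angle between a square and a hexagon (faces x \<le> b, x+y+z \<le> a+b,
  along the edge (b,0,a)--(b,a,0)).\<close>
definition TO_beta :: "real \<Rightarrow> real \<Rightarrow> real" where
  "TO_beta a b = dihedral (khalf (1, 0, 0) b) (khalf (1, 1, 1) (a + b))"

text \<open>Regular cube centred at the origin of the Klein model, vertices (\<plusminus>c, \<plusminus>c, \<plusminus>c), edge l.\<close>
definition cube_config :: "real \<Rightarrow> real \<Rightarrow> bool" where
  "cube_config c l \<longleftrightarrow> 0 < c \<and> in_klein_ball (c, c, c) \<and> hdist (c, c, c) (c, c, -c) = l"

text \<open>gamma: the pyramid with apex the centre of the cube and base the face x = c is
  {x \<le> c, y \<le> x, -y \<le> x, z \<le> x, -z \<le> x}; gamma is the dihedral angle between the base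
  (x \<le> c) and the side -x + y \<le> 0.\<close>
definition pyr_gamma :: "real \<Rightarrow> real" where
  "pyr_gamma c = dihedral (khalf (1, 0, 0) c) (khalf (-1, 1, 0) 0)"

end

theory Submission
  imports Defs
begin

lemma mink_lift:
  assumes "x^2+y^2+z^2<1" "u^2+v^2+w^2<1"
  shows "- mink (klein_lift (x,y,z)) (klein_lift (u,v,w)) =
     (1 - (x*u+y*v+z*w)) / (sqrt(1-(x^2+y^2+z^2)) * sqrt(1-(u^2+v^2+w^2)))"
proof -
  have p1: "sqrt(1-(x^2+y^2+z^2)) > 0" "sqrt(1-(u^2+v^2+w^2)) > 0" using assms by auto
  show ?thesis unfolding mink_def klein_lift_def Let_def using p1
    by (simp add: field_simps)
qed

lemma sq_sqrt_mul: "q > 0 \<Longrightarrow> sqrt q * sqrt q = (q::real)"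
  by simp

lemma hd1:
  assumes "a^2+b^2 < 1"
  shows "hdist (b,0,a) (b,a,0) = arcosh ((1 - b^2) / (1 - (a^2+b^2)))"
proof -
  have "- mink (klein_lift (b,0,a)) (klein_lift (b,a,0)) = (1 - b^2) / (1 - (a^2+b^2))"
    using mink_lift[of b 0 a b a 0] assms
    by (simp add: power2_eq_square add.commute)
  then show ?thesis unfolding hdist_def by simp
qed

lemma hd2:
  assumes "a^2+b^2 < 1"
  shows "hdist (b,a,0) (a,b,0) = arcosh ((1 - 2*a*b) / (1 - (a^2+b^2)))"
proof -
  have "- mink (klein_lift (b,a,0)) (klein_lift (a,b,0)) = (1 - 2*a*b) / (1 - (a^2+b^2))"
    using mink_lift[of b a 0 a b 0] assms
    by (simp add: power2_eq_square add.commute)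
  then show ?thesis unfolding hdist_def by simp
qed

lemma hd3:
  assumes "3*c^2 < 1"
  shows "hdist (c,c,c) (c,c,-c) = arcosh ((1 - c^2) / (1 - 3*c^2))"
proof -
  have "- mink (klein_lift (c,c,c)) (klein_lift (c,c,-c)) = (1 - c^2) / (1 - 3*c^2)"
    using mink_lift[of c c c c c "-c"] assms
    by (simp add: power2_eq_square)
  then show ?thesis unfolding hdist_def by simp
qed

lemma TO_vert_norm: "v \<in> TO_vertices a b \<Longrightarrow> (case v of (x,y,z) \<Rightarrow> x^2+y^2+z^2) = a^2+b^2"
  unfolding TO_vertices_def by (auto simp: power_mult_distrib)

lemma TO_vert0: "(0, a, b) \<in> TO_vertices a b"
  unfolding TO_vertices_def by force


lemma angles:
  assumes a: "a > 0" "a^2 = 1/7"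
  shows "TO_alpha a (2*a) = arccos (1/6)" "TO_beta a (2*a) = arccos (-1/6)"
    "pyr_gamma a = arccos (sqrt (7/12))"
proof -
  have s: "(a + 2*a)^2 = 9/7" using a by (simp add: power2_eq_square algebra_simps)
  have t: "(2*a)^2 = 4/7" using a by (simp add: power2_eq_square algebra_simps)
  have m: "2*a*(a+2*a) = 6/7" using a by (simp add: power2_eq_square algebra_simps)
  show "TO_alpha a (2*a) = arccos (1/6)"
    unfolding TO_alpha_def dihedral_def khalf_def mink_def
    by (simp add: power2_eq_square[symmetric] a(2))
  have m6: "a*(a*6) = 6/7" using a by (simp add: power2_eq_square algebra_simps)
  have q: "sqrt (3/7) * sqrt (12/7) = 6/7"
    by (simp add: real_sqrt_mult[symmetric] real_sqrt_divide real_sqrt_eq_iff)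
  show "TO_beta a (2*a) = arccos (-1/6)"
    unfolding TO_beta_def dihedral_def khalf_def mink_def
    by (simp add: power2_eq_square[symmetric] algebra_simps a(2) q m6)
  have q2: "sqrt (6/7) * sqrt 2 = sqrt (12/7)"
    by (simp add: real_sqrt_mult[symmetric])
  have q3: "1 / sqrt (12/7) = sqrt (7/12)"
    by (simp add: real_sqrt_divide)
  show "pyr_gamma a = arccos (sqrt (7/12))"
    unfolding pyr_gamma_def dihedral_def khalf_def mink_def using q2 q3
    by (simp add: power2_eq_square[symmetric] a(2))
qed

lemma angle_sum: "arccos (1/6) + 2 * arccos (-1/6) + 2 * arccos (sqrt (7/12)) = 2*pi"
proof -
  define g where "g = arccos (sqrt (7/12))"
  have b1: "sqrt (7/12) \<le> 1" "-1 \<le> sqrt (7/12)" "0 \<le> sqrt (7/12)" by (auto intro: order_trans[of _ 0])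
  have g0: "0 \<le> g" "g \<le> pi/2" unfolding g_def
    using arccos_lbound[OF b1(2,1)] arccos_le_pi2[OF b1(3,1)] by auto
  have cg: "cos g = sqrt (7/12)" unfolding g_def using cos_arccos[OF b1(2,1)] .
  have c6: "cos (2*g) = 1/6" unfolding cos_double_cos cg by simp
  have "arccos (cos (2*g)) = 2*g" using g0 arccos_cos[of "2*g"] by simp
  then have "arccos (1/6) = 2*g" unfolding c6 .
  moreover have "arccos (-1/6) = pi - arccos (1/6)" using arccos_minus[of "1/6"] by simp
  ultimately show ?thesis unfolding g_def[symmetric] by simp
qed


lemma arcosh_inj: "(x::real) \<ge> 1 \<Longrightarrow> arcosh x = arcosh (3/2) \<Longrightarrow> x = 3/2"
proof -
  assume h: "x \<ge> 1" "arcosh x = arcosh (3/2)"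
  have "cosh (arcosh x) = cosh (arcosh (3/2::real))" using h(2) by simp
  then show "x = 3/2" using h(1) cosh_arcosh_real[of x] cosh_arcosh_real[of "3/2"] by simp
qed

lemma uniqTO:
  assumes "TO_config a b (arcosh (3/2))"
  shows "0 < a \<and> a^2 = 1/7 \<and> b = 2*a"
proof -
  have ab: "0 < a" "a < b" and v: "in_klein_ball (0,a,b)"
    and h1: "hdist (b, 0, a) (b, a, 0) = arcosh (3/2)" and h2: "hdist (b, a, 0) (a, b, 0) = arcosh (3/2)"
    using assms TO_vert0[of a b] unfolding TO_config_def by auto
  have n: "a^2+b^2 < 1" using v unfolding in_klein_ball_def by simp
  have A1: "(1 - b^2) / (1 - (a^2+b^2)) \<ge> 1" using n by (simp add: divide_simps)
  have A2: "(1 - 2*a*b) / (1 - (a^2+b^2)) \<ge> 1" using n sum_squares_bound[of a b]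
    by (simp add: divide_simps power2_eq_square)
  have e1: "(1 - b^2) / (1 - (a^2+b^2)) = 3/2" using arcosh_inj[OF A1] h1 hd1[OF n] by simp
  have e2: "(1 - 2*a*b) / (1 - (a^2+b^2)) = 3/2" using arcosh_inj[OF A2] h2 hd2[OF n] by simp
  have f1: "2*(1 - b^2) = 3*(1 - (a^2+b^2))" using e1 n by (simp add: divide_simps)
  have f2: "2*(1 - 2*a*b) = 3*(1 - (a^2+b^2))" using e2 n by (simp add: divide_simps)
  have "b*b = 2*a*b" using f1 f2 by (simp add: power2_eq_square)
  then have b: "b = 2*a" using ab by simp
  have "a^2 = 1/7" using f1 unfolding b by (simp add: power2_eq_square algebra_simps)
  then show ?thesis using ab b by simp
qed

lemma uniqC:
  assumes "cube_config c (arcosh (3/2))"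
  shows "0 < c \<and> c^2 = 1/7"
proof -
  have c: "0 < c" and v: "in_klein_ball (c,c,c)" and h: "hdist (c,c,c) (c,c,-c) = arcosh (3/2)"
    using assms unfolding cube_config_def by auto
  have n: "3*c^2 < 1" using v unfolding in_klein_ball_def by simp
  have A: "(1 - c^2) / (1 - 3*c^2) \<ge> 1" using n by (simp add: divide_simps)
  have e: "(1 - c^2) / (1 - 3*c^2) = 3/2" using arcosh_inj[OF A] h hd3[OF n] by simp
  have "2*(1-c^2) = 3*(1-3*c^2)" using e n by (simp add: divide_simps)
  then show ?thesis using c by simp
qed

theorem theorem7p1:
  shows "\<exists>l::real. l > 0 \<and> (\<exists>a b. TO_config a b l) \<and> (\<exists>c. cube_config c l) \<and>
    (\<forall>a b c. TO_config a b l \<longrightarrow> cube_config c l \<longrightarrow>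
       TO_alpha a b + 2 * TO_beta a b + 2 * pyr_gamma c = 2 * pi)"
proof (intro exI conjI allI impI)
  show "arcosh (3/2::real) > 0" by simp
  define a0 :: real where "a0 = 1 / sqrt 7"
  have a0: "a0 > 0" "a0^2 = 1/7" unfolding a0_def by (auto simp: power_divide)
  have n: "a0^2 + (2*a0)^2 < 1" "3*a0^2 < 1" using a0 by (simp_all add: power_mult_distrib)
  show "TO_config a0 (2*a0) (arcosh (3/2))"
    unfolding TO_config_def
  proof (intro conjI ballI)
    fix v assume "v \<in> TO_vertices a0 (2*a0)"
    from TO_vert_norm[OF this] n show "in_klein_ball v"
      unfolding in_klein_ball_def by (cases v) auto
  next
    show "hdist (2*a0, 0, a0) (2*a0, a0, 0) = arcosh (3/2)"
      unfolding hd1[OF n(1)] by (simp add: power_mult_distrib a0(2))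
    show "hdist (2*a0, a0, 0) (a0, 2*a0, 0) = arcosh (3/2)"
      unfolding hd2[OF n(1)] by (simp add: power_mult_distrib a0(2) algebra_simps flip: power2_eq_square)
  qed (use a0 in auto)
  show "cube_config a0 (arcosh (3/2))"
    unfolding cube_config_def
    using a0(1) n hd3[OF n(2)] by (simp add: in_klein_ball_def a0(2))
next
  fix a b c :: real
  assume "TO_config a b (arcosh (3/2))" "cube_config c (arcosh (3/2))"
  with uniqTO uniqC have u: "0 < a" "a^2 = 1/7" "b = 2*a" "0 < c" "c^2 = 1/7" by auto
  show "TO_alpha a b + 2 * TO_beta a b + 2 * pyr_gamma c = 2 * pi"
    using angles[OF u(1,2)] angles(3)[OF u(4,5)] angle_sum u(3) by simp
qed

end
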